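(* Let $R$ be a $\Bbbk$-algebra, $\sigma\in\operatorname{Aut}_\Bbbk(R)$, $H,J$ two-sided ideals of $R$, and $B=R(t,\sigma,H,J)$. Then: (1) $B$ is a $\mathbb Z$-graded subalgebra of $R[t,t^{-1};\sigma]$, with $B_n=I^{(n)}t^n$ in degree $n$; (2) $B$ is generated as a $\Bbbk$-algebra by $R$, $Jt=\{jt: j\in J\}$ and $\sigma^{-1}(H)t^{-1}=\{\sigma^{-1}(h)t^{-1}:h\in H\}$; (3) $B$ is a domain if and only if $R$ is a domain; (4) suppose $R$ is a domain, $\sigma$ has infinite order, and for no integer $k\neq 0$ does there exist a nonzero $a\in R$ with $ra=a\sigma^k(r)$ for all $r\in R$. Then the center of $B$ equals $Z(R)^{\langle\sigma\rangle}=\{z\in Z(R):\sigma(z)=z\}$, where $Z(R)$ is the center of $R$.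
   Context: $\Bbbk$ is a field; all algebras are associative unital $\Bbbk$-algebras. For an algebra $R$ and $\sigma\in\operatorname{Aut}_\Bbbk(R)$, $R[t,t^{-1};\sigma]$ is the skew Laurent ring: generated over $R$ by $t,t^{-1}$ with $tt^{-1}=t^{-1}t=1$ and $t^{\pm1}r=\sigma^{\pm1}(r)t^{\pm1}$ for $r\in R$. Given two-sided ideals $H,J$ of $R$, set $I^{(0)}=R$, $I^{(n)}=J\sigma(J)\cdots\sigma^{n-1}(J)$ for $n\ge1$, and $I^{(n)}=\sigma^{-1}(H)\sigma^{-2}(H)\cdots\sigma^{n}(H)$ for $n\le-1$; it is assumed throughout that $I^{(n)}\neq0$ for all $n\in\mathbb Z$. The Bell–Rogalski (BR) algebra is $R(t,\sigma,H,J)=\bigoplus_{n\in\mathbb Z}I^{(n)}t^n\subseteq R[t,t^{-1};\sigma]$. *)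

theory Defs
  imports Main
begin

text \<open>A (unital associative) k-algebra is modelled as a ring type 'r together with a
  ring homomorphism alg from the field 'k into the centre of 'r.\<close>

definition k_algebra :: "('k::field \<Rightarrow> 'r::ring_1) \<Rightarrow> bool" where
  "k_algebra alg \<longleftrightarrow>
     alg 1 = 1 \<and> (\<forall>a b. alg (a + b) = alg a + alg b) \<and> (\<forall>a b. alg (a * b) = alg a * alg b)
     \<and> (\<forall>c r. alg c * r = r * alg c)"

definition k_automorphism :: "('k::field \<Rightarrow> 'r::ring_1) \<Rightarrow> ('r \<Rightarrow> 'r) \<Rightarrow> bool" where
  "k_automorphism alg \<sigma> \<longleftrightarrow>
     bij \<sigma> \<and> (\<forall>a b. \<sigma> (a + b) = \<sigma> a + \<sigma> b) \<and> (\<forall>a b. \<sigma> (a * b) = \<sigma> a * \<sigma> b)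
     \<and> \<sigma> 1 = 1 \<and> (\<forall>c. \<sigma> (alg c) = alg c)"

definition zpow :: "('r \<Rightarrow> 'r) \<Rightarrow> int \<Rightarrow> 'r \<Rightarrow> 'r" where
  "zpow \<sigma> i = (if 0 \<le> i then \<sigma> ^^ nat i else inv \<sigma> ^^ nat (- i))"

definition two_sided_ideal :: "'r::ring_1 set \<Rightarrow> bool" where
  "two_sided_ideal A \<longleftrightarrow> 0 \<in> A \<and> (\<forall>x\<in>A. \<forall>y\<in>A. x + y \<in> A \<and> - x \<in> A)
     \<and> (\<forall>r. \<forall>x\<in>A. r * x \<in> A \<and> x * r \<in> A)"

definition ring_domain :: "'r::ring_1 itself \<Rightarrow> bool" where
  "ring_domain _ \<longleftrightarrow> (1::'r) \<noteq> 0 \<and> (\<forall>a b::'r. a * b = 0 \<longrightarrow> a = 0 \<or> b = 0)"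

definition ring_center :: "'r::ring_1 set" where
  "ring_center = {z. \<forall>r. z * r = r * z}"

inductive_set add_span :: "'r::ring_1 set \<Rightarrow> 'r set" for S where
  zero: "0 \<in> add_span S"
| gen: "x \<in> S \<Longrightarrow> x \<in> add_span S"
| add: "x \<in> add_span S \<Longrightarrow> y \<in> add_span S \<Longrightarrow> x + y \<in> add_span S"

definition ideal_prod :: "'r::ring_1 set \<Rightarrow> 'r set \<Rightarrow> 'r set" where
  "ideal_prod A B = add_span {a * b | a b. a \<in> A \<and> b \<in> B}"

fun prodseq :: "(nat \<Rightarrow> 'r::ring_1 set) \<Rightarrow> nat \<Rightarrow> 'r set" where
  "prodseq F 0 = UNIV"
| "prodseq F (Suc 0) = F 0"
| "prodseq F (Suc (Suc k)) = ideal_prod (prodseq F (Suc k)) (F (Suc k))"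

text \<open>I^(n): for n \<ge> 1, J sigma(J) ... sigma^(n-1)(J);
  for n \<le> -1, sigma^(-1)(H) sigma^(-2)(H) ... sigma^(n)(H); I^(0) = R.\<close>
definition Iseq :: "('r::ring_1 \<Rightarrow> 'r) \<Rightarrow> 'r set \<Rightarrow> 'r set \<Rightarrow> int \<Rightarrow> 'r set" where
  "Iseq \<sigma> H J n =
     (if 0 \<le> n then prodseq (\<lambda>i. zpow \<sigma> (int i) ` J) (nat n)
      else prodseq (\<lambda>i. zpow \<sigma> (- int i - 1) ` H) (nat (- n)))"

text \<open>Elements are finitely supported functions f :: int => R, f standing for
  the sum of (f n) t^n.  Multiplication: (a t^i)(b t^j) = a sigma^i(b) t^(i+j).\<close>

definition laurent :: "(int \<Rightarrow> 'r::ring_1) set" where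
  "laurent = {f. finite {n. f n \<noteq> 0}}"

definition lzero :: "int \<Rightarrow> 'r::ring_1" where
  "lzero = (\<lambda>_. 0)"

definition lmono :: "'r::ring_1 \<Rightarrow> int \<Rightarrow> int \<Rightarrow> 'r" where
  "lmono a n = (\<lambda>m. if m = n then a else 0)"

definition lone :: "int \<Rightarrow> 'r::ring_1" where
  "lone = lmono 1 0"

definition ladd :: "(int \<Rightarrow> 'r::ring_1) \<Rightarrow> (int \<Rightarrow> 'r) \<Rightarrow> int \<Rightarrow> 'r" where
  "ladd f g = (\<lambda>n. f n + g n)"

definition lmult :: "('r::ring_1 \<Rightarrow> 'r) \<Rightarrow> (int \<Rightarrow> 'r) \<Rightarrow> (int \<Rightarrow> 'r) \<Rightarrow> int \<Rightarrow> 'r" where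
  "lmult \<sigma> f g = (\<lambda>n. \<Sum>i\<in>{i. f i \<noteq> 0}. f i * zpow \<sigma> i (g (n - i)))"

definition lscale :: "('k::field \<Rightarrow> 'r::ring_1) \<Rightarrow> 'k \<Rightarrow> (int \<Rightarrow> 'r) \<Rightarrow> int \<Rightarrow> 'r" where
  "lscale alg c f = (\<lambda>n. alg c * f n)"

definition is_subalg :: "('k::field \<Rightarrow> 'r::ring_1) \<Rightarrow> ('r \<Rightarrow> 'r) \<Rightarrow> (int \<Rightarrow> 'r) set \<Rightarrow> bool" where
  "is_subalg alg \<sigma> B \<longleftrightarrow> B \<subseteq> laurent \<and> lone \<in> B
     \<and> (\<forall>f\<in>B. \<forall>g\<in>B. ladd f g \<in> B \<and> lmult \<sigma> f g \<in> B)
     \<and> (\<forall>c. \<forall>f\<in>B. lscale alg c f \<in> B)"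

definition gen_subalg :: "('k::field \<Rightarrow> 'r::ring_1) \<Rightarrow> ('r \<Rightarrow> 'r) \<Rightarrow> (int \<Rightarrow> 'r) set \<Rightarrow> (int \<Rightarrow> 'r) set" where
  "gen_subalg alg \<sigma> S = \<Inter> {B. is_subalg alg \<sigma> B \<and> S \<subseteq> B}"

definition BR_comp :: "('r::ring_1 \<Rightarrow> 'r) \<Rightarrow> 'r set \<Rightarrow> 'r set \<Rightarrow> int \<Rightarrow> (int \<Rightarrow> 'r) set" where
  "BR_comp \<sigma> H J n = {lmono a n | a. a \<in> Iseq \<sigma> H J n}"

definition BR :: "('r::ring_1 \<Rightarrow> 'r) \<Rightarrow> 'r set \<Rightarrow> 'r set \<Rightarrow> (int \<Rightarrow> 'r) set" where
  "BR \<sigma> H J = {f \<in> laurent. \<forall>n. f n \<in> Iseq \<sigma> H J n}"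

definition lcenter :: "('r::ring_1 \<Rightarrow> 'r) \<Rightarrow> (int \<Rightarrow> 'r) set \<Rightarrow> (int \<Rightarrow> 'r) set" where
  "lcenter \<sigma> B = {f \<in> B. \<forall>g\<in>B. lmult \<sigma> f g = lmult \<sigma> g f}"

definition lring_domain :: "('r::ring_1 \<Rightarrow> 'r) \<Rightarrow> (int \<Rightarrow> 'r) set \<Rightarrow> bool" where
  "lring_domain \<sigma> B \<longleftrightarrow> (lone::int \<Rightarrow> 'r) \<noteq> lzero
     \<and> (\<forall>f\<in>B. \<forall>g\<in>B. lmult \<sigma> f g = lzero \<longrightarrow> f = lzero \<or> g = lzero)"

end

theory Submission imports Defs begin

definition rhom :: "('r::ring_1 \<Rightarrow> 'r) \<Rightarrow> bool" where
  "rhom f \<longleftrightarrow> (\<forall>a b. f (a + b) = f a + f b) \<and> (\<forall>a b. f (a * b) = f a * f b)"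

lemma rhom_add: "rhom f \<Longrightarrow> f (a + b) = f a + f b" by (simp add: rhom_def)
lemma rhom_mult: "rhom f \<Longrightarrow> f (a * b) = f a * f b" by (simp add: rhom_def)
lemma rhom_zero: "rhom f \<Longrightarrow> f 0 = 0"
  using rhom_add[of f 0 0] by simp
lemma rhom_minus: "rhom f \<Longrightarrow> f (- a) = - f a"
  using rhom_add[of f a "-a"] rhom_zero[of f] by (simp add: add_eq_0_iff2)
lemma rhom_id: "rhom id" by (simp add: rhom_def)
lemma rhom_comp: "rhom f \<Longrightarrow> rhom g \<Longrightarrow> rhom (f \<circ> g)" by (simp add: rhom_def)
lemma rhom_funpow: "rhom f \<Longrightarrow> rhom (f ^^ n)"
  by (induction n) (auto simp: rhom_id rhom_comp)
lemma rhom_inv: assumes "bij f" "rhom f" shows "rhom (inv f)"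
proof -
  have i: "inj f" and s: "surj f" using assms(1) bij_is_inj bij_is_surj by auto
  have "inv f (a + b) = inv f a + inv f b" for a b
  proof -
    have "f (inv f a + inv f b) = a + b" using rhom_add[OF assms(2)] surj_f_inv_f[OF s] by simp
    then show ?thesis using inv_f_f[OF i] by metis
  qed
  moreover have "inv f (a * b) = inv f a * inv f b" for a b
  proof -
    have "f (inv f a * inv f b) = a * b" using rhom_mult[OF assms(2)] surj_f_inv_f[OF s] by simp
    then show ?thesis using inv_f_f[OF i] by metis
  qed
  ultimately show ?thesis by (simp add: rhom_def)
qed

locale sauto =
  fixes \<sigma> :: "'r::ring_1 \<Rightarrow> 'r"
  assumes bij: "bij \<sigma>" and hom: "rhom \<sigma>"
begin

lemma inj: "inj \<sigma>" and surj: "surj \<sigma>" using bij bij_is_inj bij_is_surj by auto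

lemma zpow0: "zpow \<sigma> 0 = id" by (simp add: zpow_def)

lemma zpow_succ: "zpow \<sigma> (i + 1) = \<sigma> \<circ> zpow \<sigma> i"
proof (cases "0 \<le> i")
  case True
  then have "nat (i + 1) = Suc (nat i)" by simp
  then show ?thesis using True by (simp add: zpow_def)
next
  case False
  show ?thesis
  proof (cases "i = -1")
    case True
    then show ?thesis using surj
      by (auto simp: zpow_def fun_eq_iff surj_f_inv_f)
  next
    case F2: False
    with False have "nat (- i) = Suc (nat (- (i+1)))" by simp
    then show ?thesis using False F2 surj
      by (simp add: zpow_def fun_eq_iff surj_f_inv_f)
  qed
qed

lemma zpow_pred: "zpow \<sigma> (i - 1) = inv \<sigma> \<circ> zpow \<sigma> i"
proof -
  have "zpow \<sigma> i = \<sigma> \<circ> zpow \<sigma> (i - 1)" using zpow_succ[of "i - 1"] by simp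
  then show ?thesis using inj by (simp add: fun_eq_iff inv_f_f)
qed

lemma zpow_add: "zpow \<sigma> (i + j) = zpow \<sigma> i \<circ> zpow \<sigma> j"
proof (induction i rule: int_induct[where k=0])
  case base then show ?case by (simp add: zpow0)
next
  case (step1 i)
  have "zpow \<sigma> (i + 1 + j) = zpow \<sigma> (i + j + 1)" by (simp add: ac_simps)
  also have "\<dots> = \<sigma> \<circ> zpow \<sigma> (i + j)" by (rule zpow_succ)
  finally show ?case using step1 zpow_succ[of i] by (simp add: comp_assoc)
next
  case (step2 i)
  have "zpow \<sigma> (i - 1 + j) = zpow \<sigma> (i + j - 1)" by (simp add: algebra_simps)
  also have "\<dots> = inv \<sigma> \<circ> zpow \<sigma> (i + j)" by (rule zpow_pred)
  finally show ?case using step2 zpow_pred[of i] by (simp add: comp_assoc)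
qed

lemma zpow_zpow: "zpow \<sigma> i (zpow \<sigma> j x) = zpow \<sigma> (i + j) x"
  by (simp add: zpow_add)

lemma zpow_hom: "rhom (zpow \<sigma> i)"
  using rhom_funpow[OF hom] rhom_funpow[OF rhom_inv[OF bij hom]] by (simp add: zpow_def)

lemma zpow_add_dist: "zpow \<sigma> i (a + b) = zpow \<sigma> i a + zpow \<sigma> i b"
  using zpow_hom rhom_add by blast
lemma zpow_mult: "zpow \<sigma> i (a * b) = zpow \<sigma> i a * zpow \<sigma> i b"
  using zpow_hom rhom_mult by blast
lemma zpow_zero[simp]: "zpow \<sigma> i 0 = 0"
  using zpow_hom rhom_zero by blast
lemma zpow_inv: "zpow \<sigma> i (zpow \<sigma> (- i) x) = x"
  by (simp add: zpow_zpow zpow0)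
lemma zpow_inv': "zpow \<sigma> (- i) (zpow \<sigma> i x) = x"
  by (simp add: zpow_zpow zpow0)
lemma zpow_eq0: "zpow \<sigma> i x = 0 \<longleftrightarrow> x = 0"
  by (metis zpow_inv' zpow_zero)
lemma zpow_fix: assumes "\<sigma> z = z" shows "zpow \<sigma> i z = z"
proof -
  have a: "(\<sigma> ^^ n) z = z" for n by (induction n) (auto simp: assms)
  have "inv \<sigma> z = z" using assms inj by (metis inv_f_f)
  then have b: "(inv \<sigma> ^^ n) z = z" for n by (induction n) auto
  show ?thesis using a b by (simp add: zpow_def)
qed

lemma ideal_image: assumes "two_sided_ideal I" shows "two_sided_ideal (zpow \<sigma> i ` I)"
proof -
  have h: "rhom (zpow \<sigma> i)" by (rule zpow_hom)
  show ?thesis unfolding two_sided_ideal_def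
  proof (intro conjI ballI allI)
    have "0 \<in> I" using assms two_sided_ideal_def by blast
    then show "0 \<in> zpow \<sigma> i ` I" using image_eqI[of 0 "zpow \<sigma> i" 0 I] by simp
  next
    fix x y assume "x \<in> zpow \<sigma> i ` I" "y \<in> zpow \<sigma> i ` I"
    then obtain a b where ab: "a \<in> I" "b \<in> I" "x = zpow \<sigma> i a" "y = zpow \<sigma> i b" by auto
    have "a + b \<in> I" "- a \<in> I" using ab assms unfolding two_sided_ideal_def by auto
    then show "x + y \<in> zpow \<sigma> i ` I" "- x \<in> zpow \<sigma> i ` I"
      using ab rhom_minus[OF h] zpow_add_dist[of i a b]
        image_eqI[of "x+y" "zpow \<sigma> i" "a+b" I] image_eqI[of "-x" "zpow \<sigma> i" "-a" I] by auto
  next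
    fix r x assume "x \<in> zpow \<sigma> i ` I"
    then obtain a where a: "a \<in> I" "x = zpow \<sigma> i a" by auto
    have r: "r = zpow \<sigma> i (zpow \<sigma> (-i) r)" by (simp add: zpow_inv)
    let ?s = "zpow \<sigma> (-i) r"
    have "?s * a \<in> I" "a * ?s \<in> I" using a assms unfolding two_sided_ideal_def by auto
    moreover have "r * x = zpow \<sigma> i (?s * a)" "x * r = zpow \<sigma> i (a * ?s)"
      using a by (simp_all add: zpow_mult zpow_inv)
    ultimately show "r * x \<in> zpow \<sigma> i ` I" "x * r \<in> zpow \<sigma> i ` I" by auto
  qed
qed

end

lemma add_span_induct2:
  assumes "x \<in> add_span S" "P 0" "\<And>s. s \<in> S \<Longrightarrow> P s" "\<And>a b. P a \<Longrightarrow> P b \<Longrightarrow> P (a + b)"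
  shows "P x"
  using assms(1) by (induction rule: add_span.induct) (auto intro: assms)

lemma ideal_zero: "two_sided_ideal A \<Longrightarrow> 0 \<in> A" by (simp add: two_sided_ideal_def)
lemma ideal_add: "two_sided_ideal A \<Longrightarrow> x \<in> A \<Longrightarrow> y \<in> A \<Longrightarrow> x + y \<in> A" by (simp add: two_sided_ideal_def)
lemma ideal_neg: "two_sided_ideal A \<Longrightarrow> x \<in> A \<Longrightarrow> - x \<in> A" by (simp add: two_sided_ideal_def)
lemma ideal_lmult: "two_sided_ideal A \<Longrightarrow> x \<in> A \<Longrightarrow> r * x \<in> A" by (simp add: two_sided_ideal_def)
lemma ideal_rmult: "two_sided_ideal A \<Longrightarrow> x \<in> A \<Longrightarrow> x * r \<in> A" by (simp add: two_sided_ideal_def)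
lemma ideal_UNIV: "two_sided_ideal (UNIV :: 'r::ring_1 set)" by (simp add: two_sided_ideal_def)

lemma ideal_sum: "two_sided_ideal A \<Longrightarrow> (\<And>i. i \<in> S \<Longrightarrow> f i \<in> A) \<Longrightarrow> sum f S \<in> A"
  by (induction S rule: infinite_finite_induct) (auto intro: ideal_zero ideal_add)

lemma ideal_prod_ideal:
  assumes A: "two_sided_ideal A" and B: "two_sided_ideal B"
  shows "two_sided_ideal (ideal_prod A B)"
  unfolding two_sided_ideal_def
proof (intro conjI ballI allI)
  show "0 \<in> ideal_prod A B" by (simp add: ideal_prod_def add_span.zero)
next
  fix x y assume x: "x \<in> ideal_prod A B" and y: "y \<in> ideal_prod A B"
  show "x + y \<in> ideal_prod A B" using x y by (simp add: ideal_prod_def add_span.add)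
  show "- x \<in> ideal_prod A B" using x unfolding ideal_prod_def
  proof (induction rule: add_span.induct)
    case zero show ?case by (simp add: add_span.zero) 
  next
    case (gen s)
    then obtain a b where "s = a * b" "a \<in> A" "b \<in> B" by auto
    then have "- s = (-a) * b \<and> -a \<in> A \<and> b \<in> B" using A by (simp add: ideal_neg)
    then show ?case by (blast intro: add_span.gen)
  next
    case (add a b) then show ?case using add_span.add[of "-a" _ "-b"] by (simp add: add.commute)
  qed
next
  fix r x assume x: "x \<in> ideal_prod A B"
  show "r * x \<in> ideal_prod A B" using x unfolding ideal_prod_def
  proof (induction rule: add_span.induct)
    case zero show ?case by (simp add: add_span.zero) 
  next
    case (gen s)
    then obtain a b where "s = a * b" "a \<in> A" "b \<in> B" by auto
    then have "r * s = (r*a) * b \<and> r*a \<in> A \<and> b \<in> B" using A by (simp add: ideal_lmult mult.assoc)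
    then show ?case by (blast intro: add_span.gen)
  next
    case (add a b) then show ?case using add_span.add by (simp add: distrib_left)
  qed
  show "x * r \<in> ideal_prod A B" using x unfolding ideal_prod_def
  proof (induction rule: add_span.induct)
    case zero show ?case by (simp add: add_span.zero) 
  next
    case (gen s)
    then obtain a b where "s = a * b" "a \<in> A" "b \<in> B" by auto
    then have "s * r = a * (b * r) \<and> a \<in> A \<and> b * r \<in> B" using B by (simp add: ideal_rmult mult.assoc)
    then show ?case by (blast intro: add_span.gen)
  next
    case (add a b) then show ?case using add_span.add by (simp add: distrib_right)
  qed
qed

lemma prodseq_ideal: "(\<And>i. two_sided_ideal (F i)) \<Longrightarrow> two_sided_ideal (prodseq F k)"
  by (induction F k rule: prodseq.induct) (auto simp: ideal_UNIV ideal_prod_ideal)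

lemma prodseq_mem:
  assumes "\<And>i. two_sided_ideal (F i)" "x \<in> prodseq F k" "y \<in> F k"
  shows "x * y \<in> prodseq F (Suc k)"
proof (cases k)
  case 0 then show ?thesis using assms by (simp add: ideal_lmult)
next
  case (Suc k') then show ?thesis using assms by (auto simp: ideal_prod_def intro!: add_span.gen)
qed

lemma prodseq_Suc_induct:
  assumes "z \<in> prodseq F (Suc k)" "P 0" "\<And>a b. P a \<Longrightarrow> P b \<Longrightarrow> P (a + b)"
    "\<And>x y. x \<in> prodseq F k \<Longrightarrow> y \<in> F k \<Longrightarrow> P (x * y)"
  shows "P z"
proof (cases k)
  case 0 then show ?thesis using assms(1) assms(4)[of 1 z] by simp
next
  case (Suc k')
  then have "z \<in> add_span {a * b |a b. a \<in> prodseq F k \<and> b \<in> F k}"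
    using assms(1) by (simp add: ideal_prod_def)
  then show ?thesis by (rule add_span_induct2) (auto intro: assms)
qed

lemma prodseq_Suc_sub:
  assumes "\<And>i. two_sided_ideal (F i)"
  shows "prodseq F (Suc k) \<subseteq> prodseq F k"
proof
  fix z assume "z \<in> prodseq F (Suc k)"
  have I: "two_sided_ideal (prodseq F k)" using prodseq_ideal assms by blast
  show "z \<in> prodseq F k" using \<open>z \<in> prodseq F (Suc k)\<close>
  proof (rule prodseq_Suc_induct)
    show "0 \<in> prodseq F k" by (rule ideal_zero[OF I])
    show "a + b \<in> prodseq F k" if "a \<in> prodseq F k" "b \<in> prodseq F k" for a b
      using ideal_add[OF I] that by blast
    show "x * y \<in> prodseq F k" if "x \<in> prodseq F k" for x y
      using ideal_rmult[OF I] that by blast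
  qed
qed

lemma prodseq_prefix:
  fixes F :: "nat \<Rightarrow> 'r::ring_1 set" and k l :: nat
  assumes "\<And>i. two_sided_ideal (F i)" "k \<le> l"
  shows "prodseq F l \<subseteq> prodseq F k"
  using assms(2)
proof (induction l)
  case 0 then show ?case by simp
next
  case (Suc l)
  show ?case
  proof (cases "k = Suc l")
    case True then show ?thesis by simp
  next
    case False
    then have "k \<le> l" using Suc.prems by simp
    then have "prodseq F l \<subseteq> prodseq F k" by (rule Suc.IH)
    moreover have "prodseq F (Suc l) \<subseteq> prodseq F l" by (rule prodseq_Suc_sub[OF assms(1)])
    ultimately show ?thesis by (rule subset_trans[rotated])
  qed
qed

lemma prodseq_suffix:
  assumes "\<And>i. two_sided_ideal (F i)"
  shows "prodseq F (k + l) \<subseteq> prodseq (\<lambda>i. F (i + k)) l"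
proof (induction l)
  case 0 then show ?case by simp
next
  case (Suc l)
  have I: "two_sided_ideal (prodseq (\<lambda>i. F (i + k)) (Suc l))"
    by (rule prodseq_ideal) (rule assms)
  show ?case
  proof
    fix z assume "z \<in> prodseq F (k + Suc l)"
    then have "z \<in> prodseq F (Suc (k + l))" by simp
    then show "z \<in> prodseq (\<lambda>i. F (i + k)) (Suc l)"
    proof (rule prodseq_Suc_induct)
      show "0 \<in> prodseq (\<lambda>i. F (i + k)) (Suc l)" using I ideal_zero by blast
    next
      fix a b assume "a \<in> prodseq (\<lambda>i. F (i + k)) (Suc l)" "b \<in> prodseq (\<lambda>i. F (i + k)) (Suc l)"
      then show "a + b \<in> prodseq (\<lambda>i. F (i + k)) (Suc l)" using I ideal_add by blast
    next
      fix x y assume "x \<in> prodseq F (k + l)" "y \<in> F (k + l)"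
      then have "x \<in> prodseq (\<lambda>i. F (i + k)) l" "y \<in> F (l + k)" using Suc.IH
        by (auto simp only: add.commute subsetD)
      then show "x * y \<in> prodseq (\<lambda>i. F (i + k)) (Suc l)"
        by (rule prodseq_mem[of "\<lambda>i. F (i + k)", rotated]) (rule assms)
    qed
  qed
qed

lemma prodseq_concat:
  assumes "\<And>i. two_sided_ideal (F i)" "x \<in> prodseq F m"
  shows "y \<in> prodseq (\<lambda>i. F (i + m)) n \<Longrightarrow> x * y \<in> prodseq F (m + n)"
proof (induction n arbitrary: y)
  case 0
  have "two_sided_ideal (prodseq F m)" by (rule prodseq_ideal) (rule assms)
  then show ?case using assms(2) ideal_rmult by simp
next
  case (Suc n)
  have I: "two_sided_ideal (prodseq F (m + Suc n))" by (rule prodseq_ideal) (rule assms)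
  from Suc.prems show ?case
  proof (rule prodseq_Suc_induct)
    show "x * 0 \<in> prodseq F (m + Suc n)" using I ideal_zero by simp
  next
    fix a b assume "x * a \<in> prodseq F (m + Suc n)" "x * b \<in> prodseq F (m + Suc n)"
    then show "x * (a + b) \<in> prodseq F (m + Suc n)" using I ideal_add by (simp add: distrib_left)
  next
    fix u v assume "u \<in> prodseq (\<lambda>i. F (i + m)) n" "v \<in> F (n + m)"
    then show "x * (u * v) \<in> prodseq F (m + Suc n)"
      using Suc.IH prodseq_mem[of F "x*u" "m+n" v] assms(1) by (simp add: mult.assoc add.commute)
  qed
qed

context sauto begin
lemma prodseq_image:
  assumes "\<And>i. two_sided_ideal (F i)" "x \<in> prodseq F n"
  shows "zpow \<sigma> j x \<in> prodseq (\<lambda>i. zpow \<sigma> j ` F i) n"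
  using assms(2)
proof (induction n arbitrary: x)
  case 0 then show ?case by simp
next
  case (Suc n)
  have I: "two_sided_ideal (prodseq (\<lambda>i. zpow \<sigma> j ` F i) (Suc n))"
    by (rule prodseq_ideal) (rule ideal_image, rule assms)
  from Suc.prems show ?case
  proof (rule prodseq_Suc_induct)
    show "zpow \<sigma> j 0 \<in> prodseq (\<lambda>i. zpow \<sigma> j ` F i) (Suc n)" using I ideal_zero by simp
  next
    fix a b assume "zpow \<sigma> j a \<in> prodseq (\<lambda>i. zpow \<sigma> j ` F i) (Suc n)"
      "zpow \<sigma> j b \<in> prodseq (\<lambda>i. zpow \<sigma> j ` F i) (Suc n)"
    then show "zpow \<sigma> j (a + b) \<in> prodseq (\<lambda>i. zpow \<sigma> j ` F i) (Suc n)"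
      using I ideal_add by (simp add: zpow_add_dist)
  next
    fix u v assume "u \<in> prodseq F n" "v \<in> F n"
    then show "zpow \<sigma> j (u * v) \<in> prodseq (\<lambda>i. zpow \<sigma> j ` F i) (Suc n)"
      using Suc.IH prodseq_mem[of "\<lambda>i. zpow \<sigma> j ` F i" "zpow \<sigma> j u" n "zpow \<sigma> j v"]
        ideal_image assms by (simp add: zpow_mult)
  qed
qed
end


locale brctx = sauto \<sigma> for \<sigma> :: "'r::ring_1 \<Rightarrow> 'r" +
  fixes H J :: "'r set"
  assumes H: "two_sided_ideal H" and J: "two_sided_ideal J"
begin

definition FJ :: "nat \<Rightarrow> 'r set" where "FJ i = zpow \<sigma> (int i) ` J"
definition GH :: "nat \<Rightarrow> 'r set" where "GH i = zpow \<sigma> (- int i - 1) ` H"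

lemma FJ_ideal: "two_sided_ideal (FJ i)" unfolding FJ_def by (rule ideal_image[OF J])
lemma GH_ideal: "two_sided_ideal (GH i)" unfolding GH_def by (rule ideal_image[OF H])

lemma Iseq_pos: "Iseq \<sigma> H J (int k) = prodseq FJ k"
  by (simp add: Iseq_def FJ_def[abs_def])
lemma Iseq_neg: "Iseq \<sigma> H J (- int k) = prodseq GH k"
proof (cases k)
  case 0 then show ?thesis by (simp add: Iseq_def)
next
  case (Suc k')
  then have "\<not> 0 \<le> - int k" "nat (- (- int k)) = k" by simp_all
  then show ?thesis unfolding Iseq_def GH_def[abs_def] by presburger
qed

lemma Iseq_ideal: "two_sided_ideal (Iseq \<sigma> H J n)"
proof -
  have "two_sided_ideal (prodseq FJ k)" for k by (rule prodseq_ideal) (rule FJ_ideal)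
  moreover have "two_sided_ideal (prodseq GH k)" for k by (rule prodseq_ideal) (rule GH_ideal)
  ultimately show ?thesis unfolding Iseq_def FJ_def GH_def by auto
qed

lemma Iseq_0: "Iseq \<sigma> H J 0 = UNIV" by (simp add: Iseq_def)
lemma Iseq_1: "Iseq \<sigma> H J 1 = J" by (simp add: Iseq_def zpow0)
lemma Iseq_m1: "Iseq \<sigma> H J (-1) = zpow \<sigma> (-1) ` H" by (simp add: Iseq_def)

lemma FJ_shift: "(\<lambda>i. zpow \<sigma> (int p) ` FJ i) = (\<lambda>i. FJ (i + p))"
  by (auto simp: fun_eq_iff image_image zpow_zpow FJ_def add.commute)
lemma GH_shift: "(\<lambda>i. zpow \<sigma> (- int p) ` GH i) = (\<lambda>i. GH (i + p))"
  by (auto simp: fun_eq_iff image_image zpow_zpow GH_def algebra_simps)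
lemma GH_shift2: "(\<lambda>i. zpow \<sigma> (int p) ` GH i) = (\<lambda>i. zpow \<sigma> (int p - int i - 1) ` H)"
  by (auto simp: fun_eq_iff image_image zpow_zpow GH_def algebra_simps)
lemma FJ_shift2: "(\<lambda>i. zpow \<sigma> (- int p) ` FJ i) = (\<lambda>i. zpow \<sigma> (int i - int p) ` J)"
  by (auto simp: fun_eq_iff image_image zpow_zpow FJ_def algebra_simps)

lemma grading:
  assumes a: "a \<in> Iseq \<sigma> H J m" and b: "b \<in> Iseq \<sigma> H J n"
  shows "a * zpow \<sigma> m b \<in> Iseq \<sigma> H J (m + n)"
proof -
  have I: "two_sided_ideal (Iseq \<sigma> H J (m + n))" by (rule Iseq_ideal)
  consider (pp) p q where "m = int p" "n = int q" | (nn) p q where "m = - int p" "n = - int q"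
    | (pn) p q where "m = int p" "n = - int q" | (np) p q where "m = - int p" "n = int q"
    by (metis int_cases2)
  then show ?thesis
  proof cases
    case pp
    have "zpow \<sigma> m b \<in> prodseq (\<lambda>i. FJ (i + p)) q"
      using prodseq_image[of FJ b q m, OF FJ_ideal] b pp FJ_shift[of p] by (simp add: Iseq_pos)
    then have "a * zpow \<sigma> m b \<in> prodseq FJ (p + q)"
      using prodseq_concat[of FJ a p, OF FJ_ideal] a pp by (simp add: Iseq_pos)
    moreover have "m + n = int (p + q)" using pp by simp
    ultimately show ?thesis by (metis Iseq_pos)
  next
    case nn
    have "zpow \<sigma> m b \<in> prodseq (\<lambda>i. GH (i + p)) q"
      using prodseq_image[of GH b q m, OF GH_ideal] b nn GH_shift[of p] by (simp add: Iseq_neg)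
    then have "a * zpow \<sigma> m b \<in> prodseq GH (p + q)"
      using prodseq_concat[of GH a p, OF GH_ideal] a nn by (simp add: Iseq_neg)
    moreover have "m + n = - int (p + q)" using nn by simp
    ultimately show ?thesis by (metis Iseq_neg)
  next
    case pn
    show ?thesis
    proof (cases "q \<le> p")
      case True
      then obtain r where r: "p = q + r" using le_Suc_ex by blast
      have "a \<in> prodseq FJ p" using a pn Iseq_pos by metis
      then have "a \<in> prodseq FJ r" using prodseq_prefix[of FJ r p, OF FJ_ideal] r by auto
      moreover have "m + n = int r" using pn r by simp
      ultimately show ?thesis using I ideal_rmult by (metis Iseq_pos)
    next
      case False
      then obtain r where r: "q = p + r" by (metis le_Suc_ex nat_le_linear)
      have "b \<in> prodseq GH q" using b pn Iseq_neg by metis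
      then have "zpow \<sigma> m b \<in> prodseq (\<lambda>i. zpow \<sigma> (int p - int i - 1) ` H) (p + r)"
        using prodseq_image[of GH b q m, OF GH_ideal] pn r GH_shift2[of p] by simp
      also have "\<dots> \<subseteq> prodseq (\<lambda>i. zpow \<sigma> (int p - int (i + p) - 1) ` H) r"
        by (rule prodseq_suffix) (rule ideal_image[OF H])
      also have "\<dots> = prodseq GH r" by (simp add: GH_def[abs_def] algebra_simps)
      finally have "zpow \<sigma> m b \<in> prodseq GH r" .
      moreover have "m + n = - int r" using pn r by simp
      ultimately show ?thesis using I ideal_lmult by (metis Iseq_neg)
    qed
  next
    case np
    show ?thesis
    proof (cases "p \<le> q")
      case True
      then obtain r where r: "q = p + r" using le_Suc_ex by blast
      have "b \<in> prodseq FJ q" using b np Iseq_pos by metis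
      then have "zpow \<sigma> m b \<in> prodseq (\<lambda>i. zpow \<sigma> (int i - int p) ` J) (p + r)"
        using prodseq_image[of FJ b q m, OF FJ_ideal] np r FJ_shift2[of p] by simp
      also have "\<dots> \<subseteq> prodseq (\<lambda>i. zpow \<sigma> (int (i + p) - int p) ` J) r"
        by (rule prodseq_suffix) (rule ideal_image[OF J])
      also have "\<dots> = prodseq FJ r" by (simp add: FJ_def[abs_def])
      finally have "zpow \<sigma> m b \<in> prodseq FJ r" .
      moreover have "m + n = int r" using np r by simp
      ultimately show ?thesis using I ideal_lmult by (metis Iseq_pos)
    next
      case False
      then obtain r where r: "p = q + r" by (metis le_Suc_ex nat_le_linear)
      have "a \<in> prodseq GH p" using a np Iseq_neg by metis
      then have "a \<in> prodseq GH r" using prodseq_prefix[of GH r p, OF GH_ideal] r by auto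
      moreover have "m + n = - int r" using np r by simp
      ultimately show ?thesis using I ideal_rmult by (metis Iseq_neg)
    qed
  qed
qed

end

lemma lmono_0[simp]: "lmono 0 n = lzero" by (simp add: lmono_def lzero_def fun_eq_iff)
lemma ladd_mono: "ladd (lmono a n) (lmono b n) = lmono (a + b) n"
  by (simp add: lmono_def ladd_def fun_eq_iff)
lemma lmono_inj: "lmono a n = lmono b n \<Longrightarrow> a = b"
  by (metis lmono_def)
lemma lmono_supp: "{m. lmono a n m \<noteq> 0} \<subseteq> {n}" by (auto simp: lmono_def)
lemma lmono_laurent: "lmono a n \<in> laurent"
  unfolding laurent_def using lmono_supp finite_subset by blast

context sauto begin

lemma lmult_alt:
  assumes "finite S" "{i. f i \<noteq> 0} \<subseteq> S"
  shows "lmult \<sigma> f g n = (\<Sum>i\<in>S. f i * zpow \<sigma> i (g (n - i)))"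
  unfolding lmult_def
  by (rule sum.mono_neutral_left) (use assms in auto)

lemma lmult_mono: "lmult \<sigma> (lmono a m) (lmono b k) = lmono (a * zpow \<sigma> m b) (m + k)"
proof
  fix n
  have "lmult \<sigma> (lmono a m) (lmono b k) n = (\<Sum>i\<in>{m}. lmono a m i * zpow \<sigma> i (lmono b k (n - i)))"
    by (rule lmult_alt) (auto simp: lmono_def)
  then show "lmult \<sigma> (lmono a m) (lmono b k) n = lmono (a * zpow \<sigma> m b) (m + k) n"
    by (auto simp: lmono_def)
qed

lemma lmult_left0: "lmult \<sigma> (lmono r 0) g n = r * g n"
proof -
  have "lmult \<sigma> (lmono r 0) g n = (\<Sum>i\<in>{0}. lmono r 0 i * zpow \<sigma> i (g (n - i)))"
    by (rule lmult_alt) (auto simp: lmono_def)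
  then show ?thesis by (simp add: lmono_def zpow0)
qed

lemma lmult_right0:
  assumes "f \<in> laurent" shows "lmult \<sigma> f (lmono r 0) n = f n * zpow \<sigma> n r"
proof -
  have "lmult \<sigma> f (lmono r 0) n = (\<Sum>i\<in>insert n {i. f i \<noteq> 0}. f i * zpow \<sigma> i (lmono r 0 (n - i)))"
    by (rule lmult_alt) (use assms in \<open>auto simp: laurent_def\<close>)
  also have "\<dots> = (\<Sum>i\<in>insert n {i. f i \<noteq> 0}. if i = n then f n * zpow \<sigma> n r else 0)"
    by (rule sum.cong) (auto simp: lmono_def)
  also have "\<dots> = f n * zpow \<sigma> n r" using assms by (simp add: laurent_def)
  finally show ?thesis .
qed

lemma lmult_laurent:
  assumes f: "f \<in> laurent" and g: "g \<in> laurent" shows "lmult \<sigma> f g \<in> laurent"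
proof -
  let ?F = "{i. f i \<noteq> 0}" and ?G = "{j. g j \<noteq> 0}"
  have "{n. lmult \<sigma> f g n \<noteq> 0} \<subseteq> (\<lambda>(i, j). i + j) ` (?F \<times> ?G)"
  proof
    fix n assume n: "n \<in> {n. lmult \<sigma> f g n \<noteq> 0}"
    have "\<exists>i\<in>?F. g (n - i) \<noteq> 0"
    proof (rule ccontr)
      assume "\<not> ?thesis"
      then have "lmult \<sigma> f g n = 0" unfolding lmult_def by (intro sum.neutral) auto
      then show False using n by simp
    qed
    then obtain i where "i \<in> ?F" "n - i \<in> ?G" by auto
    then show "n \<in> (\<lambda>(i, j). i + j) ` (?F \<times> ?G)"
      by (intro image_eqI[of _ _ "(i, n - i)"]) auto
  qed
  moreover have "finite ((\<lambda>(i, j). i + j) ` (?F \<times> ?G))" using f g by (simp add: laurent_def)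
  ultimately show ?thesis unfolding laurent_def using finite_subset by blast
qed

end

context brctx begin

lemma lmono_BR: assumes "a \<in> Iseq \<sigma> H J n" shows "lmono a n \<in> BR \<sigma> H J"
proof -
  have "lmono a n \<in> laurent" by (rule lmono_laurent)
  moreover have "\<forall>m. lmono a n m \<in> Iseq \<sigma> H J m"
    using assms by (auto simp: lmono_def ideal_zero[OF Iseq_ideal])
  ultimately show ?thesis by (simp add: BR_def)
qed

lemma BR_subalg:
  assumes alg: "k_algebra alg"
  shows "is_subalg alg \<sigma> (BR \<sigma> H J)"
  unfolding is_subalg_def
proof (intro conjI ballI allI)
  show "BR \<sigma> H J \<subseteq> laurent" by (auto simp: BR_def)
  show "lone \<in> BR \<sigma> H J" unfolding lone_def by (rule lmono_BR) (simp add: Iseq_0)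
next
  fix f g assume f: "f \<in> BR \<sigma> H J" and g: "g \<in> BR \<sigma> H J"
  show "ladd f g \<in> BR \<sigma> H J"
  proof -
    have "{n. ladd f g n \<noteq> 0} \<subseteq> {n. f n \<noteq> 0} \<union> {n. g n \<noteq> 0}" by (auto simp: ladd_def)
    then have "ladd f g \<in> laurent" using f g unfolding BR_def laurent_def
      using finite_subset by auto
    then show ?thesis using f g by (auto simp: BR_def ladd_def intro: ideal_add[OF Iseq_ideal])
  qed
  show "lmult \<sigma> f g \<in> BR \<sigma> H J"
  proof -
    have "lmult \<sigma> f g n \<in> Iseq \<sigma> H J n" for n
      unfolding lmult_def
    proof (rule ideal_sum[OF Iseq_ideal])
      fix i
      have "f i * zpow \<sigma> i (g (n - i)) \<in> Iseq \<sigma> H J (i + (n - i))"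
        by (rule grading) (use f g in \<open>auto simp: BR_def\<close>)
      then show "f i * zpow \<sigma> i (g (n - i)) \<in> Iseq \<sigma> H J n" by simp
    qed
    then show ?thesis using f g lmult_laurent by (auto simp: BR_def)
  qed
next
  fix c f assume f: "f \<in> BR \<sigma> H J"
  have "{n. lscale alg c f n \<noteq> 0} \<subseteq> {n. f n \<noteq> 0}" by (auto simp: lscale_def)
  then have "lscale alg c f \<in> laurent" using f unfolding BR_def laurent_def
    using finite_subset by auto
  then show "lscale alg c f \<in> BR \<sigma> H J" using f
    by (auto simp: BR_def lscale_def intro: ideal_lmult[OF Iseq_ideal])
qed

lemma BR_comp_sub: "BR_comp \<sigma> H J n \<subseteq> BR \<sigma> H J"
  by (auto simp: BR_comp_def intro: lmono_BR)

lemma BR_comp_mult: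
  "f \<in> BR_comp \<sigma> H J m \<Longrightarrow> g \<in> BR_comp \<sigma> H J n \<Longrightarrow> lmult \<sigma> f g \<in> BR_comp \<sigma> H J (m + n)"
  by (auto simp: BR_comp_def lmult_mono intro: grading)

end

lemma alg_zero: "k_algebra alg \<Longrightarrow> alg 0 = 0"
  unfolding k_algebra_def by (metis add_cancel_right_right add_0)

lemma subalg_zero:
  assumes "k_algebra alg" "is_subalg alg \<sigma> B" shows "lzero \<in> B"
proof -
  have "lone \<in> B" using assms(2) by (simp add: is_subalg_def)
  then have "lscale alg 0 lone \<in> B" using assms(2) by (simp add: is_subalg_def)
  moreover have "lscale alg 0 lone = lzero" using alg_zero[OF assms(1)]
    by (simp add: lscale_def lzero_def fun_eq_iff)
  ultimately show ?thesis by simp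
qed

lemma subalg_finsum:
  assumes sub: "is_subalg alg \<sigma> B" and z: "lzero \<in> B"
  shows "finite S \<Longrightarrow> {n. f n \<noteq> 0} \<subseteq> S \<Longrightarrow> (\<And>n. lmono (f n) n \<in> B) \<Longrightarrow> f \<in> B"
proof (induction S arbitrary: f rule: finite_induct)
  case empty
  then have "f = lzero" by (auto simp: lzero_def fun_eq_iff)
  then show ?case using z by simp
next
  case (insert s S)
  let ?f = "f(s := 0)"
  have "?f \<in> B"
  proof (rule insert.IH)
    show "{n. ?f n \<noteq> 0} \<subseteq> S" using insert.prems by auto
    show "lmono (?f n) n \<in> B" for n using insert.prems z by (cases "n = s") auto
  qed
  moreover have "lmono (f s) s \<in> B" by (rule insert.prems)
  ultimately have "ladd ?f (lmono (f s) s) \<in> B" using sub by (simp add: is_subalg_def)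
  moreover have "ladd ?f (lmono (f s) s) = f" by (auto simp: ladd_def lmono_def fun_eq_iff)
  ultimately show ?case by simp
qed

context brctx begin

lemma BR_in_subalg:
  assumes alg: "k_algebra alg" and sub: "is_subalg alg \<sigma> B"
    and S: "{lmono r 0 | r. True} \<union> {lmono j 1 | j. j \<in> J}
           \<union> {lmono (zpow \<sigma> (-1) h) (-1) | h. h \<in> H} \<subseteq> B"
  shows "BR \<sigma> H J \<subseteq> B"
proof -
  have z: "lzero \<in> B" by (rule subalg_zero[OF alg sub])
  have add: "ladd f g \<in> B" "lmult \<sigma> f g \<in> B" if "f \<in> B" "g \<in> B" for f g
    using sub that by (auto simp: is_subalg_def)
  have pos: "\<forall>x \<in> prodseq FJ k. lmono x (int k) \<in> B" for k
  proof (induction k)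
    case 0 then show ?case using S by auto
  next
    case (Suc k)
    show ?case
    proof
      fix w assume "w \<in> prodseq FJ (Suc k)"
      then show "lmono w (int (Suc k)) \<in> B"
      proof (rule prodseq_Suc_induct)
        show "lmono 0 (int (Suc k)) \<in> B" using z by simp
      next
        fix a b assume "lmono a (int (Suc k)) \<in> B" "lmono b (int (Suc k)) \<in> B"
        then show "lmono (a + b) (int (Suc k)) \<in> B" using add ladd_mono by metis
      next
        fix x y assume x: "x \<in> prodseq FJ k" and y: "y \<in> FJ k"
        then obtain j where j: "j \<in> J" "y = zpow \<sigma> (int k) j" by (auto simp: FJ_def)
        have "lmono j 1 \<in> B" using S j by auto
        moreover have "lmono x (int k) \<in> B" using Suc x by auto
        ultimately have "lmult \<sigma> (lmono x (int k)) (lmono j 1) \<in> B" using add by blast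
        then have "lmono (x * y) (int k + 1) \<in> B" using j by (simp add: lmult_mono)
        moreover have "int (Suc k) = int k + 1" by simp
        ultimately show "lmono (x * y) (int (Suc k)) \<in> B" by (simp only:)
      qed
    qed
  qed
  have neg: "\<forall>x \<in> prodseq GH k. lmono x (- int k) \<in> B" for k
  proof (induction k)
    case 0 then show ?case using S by auto
  next
    case (Suc k)
    show ?case
    proof
      fix w assume "w \<in> prodseq GH (Suc k)"
      then show "lmono w (- int (Suc k)) \<in> B"
      proof (rule prodseq_Suc_induct)
        show "lmono 0 (- int (Suc k)) \<in> B" using z by simp
      next
        fix a b assume "lmono a (- int (Suc k)) \<in> B" "lmono b (- int (Suc k)) \<in> B"
        then show "lmono (a + b) (- int (Suc k)) \<in> B" using add ladd_mono by metis
      next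
        fix x y assume x: "x \<in> prodseq GH k" and y: "y \<in> GH k"
        then obtain h where h: "h \<in> H" "y = zpow \<sigma> (- int k - 1) h" by (auto simp: GH_def)
        have "lmono (zpow \<sigma> (-1) h) (-1) \<in> B" using S h by auto
        moreover have "lmono x (- int k) \<in> B" using Suc x by auto
        ultimately have "lmult \<sigma> (lmono x (- int k)) (lmono (zpow \<sigma> (-1) h) (-1)) \<in> B" using add by blast
        moreover have "- int k + -1 = - int k - 1" by simp
        ultimately have "lmono (x * y) (- int k - 1) \<in> B" using h by (simp add: lmult_mono zpow_zpow)
        moreover have "- int (Suc k) = - int k - 1" by simp
        ultimately show "lmono (x * y) (- int (Suc k)) \<in> B" by (simp only:)
      qed
    qed
  qed
  have mono: "lmono a n \<in> B" if "a \<in> Iseq \<sigma> H J n" for a n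
  proof (cases "0 \<le> n")
    case True
    then obtain k where "n = int k" by (metis nonneg_eq_int)
    then show ?thesis using pos that by (simp add: Iseq_pos)
  next
    case False
    then obtain k where "n = - int k" by (metis nonpos_int_cases linear)
    then show ?thesis using neg that by (simp add: Iseq_neg)
  qed
  show ?thesis
  proof
    fix f assume f: "f \<in> BR \<sigma> H J"
    show "f \<in> B"
      by (rule subalg_finsum[OF sub z, of "{n. f n \<noteq> 0}"]) (use f mono in \<open>auto simp: BR_def laurent_def\<close>)
  qed
qed

lemma BR_gen:
  assumes alg: "k_algebra alg"
  shows "BR \<sigma> H J = gen_subalg alg \<sigma>
          ({lmono r 0 | r. True} \<union> {lmono j 1 | j. j \<in> J}
           \<union> {lmono (zpow \<sigma> (-1) h) (-1) | h. h \<in> H})" (is "_ = gen_subalg alg \<sigma> ?S")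
proof
  show "BR \<sigma> H J \<subseteq> gen_subalg alg \<sigma> ?S"
    unfolding gen_subalg_def using BR_in_subalg[OF alg] by blast
  have "?S \<subseteq> BR \<sigma> H J"
  proof -
    have "lmono r 0 \<in> BR \<sigma> H J" for r using BR_comp_sub[of 0] by (auto simp: BR_comp_def Iseq_0)
    moreover have "lmono j 1 \<in> BR \<sigma> H J" if "j \<in> J" for j
      using BR_comp_sub[of 1] that by (auto simp: BR_comp_def Iseq_1)
    moreover have "lmono (zpow \<sigma> (-1) h) (-1) \<in> BR \<sigma> H J" if "h \<in> H" for h
      using BR_comp_sub[of "-1"] that by (auto simp: BR_comp_def Iseq_m1)
    ultimately show ?thesis by blast
  qed
  then show "gen_subalg alg \<sigma> ?S \<subseteq> BR \<sigma> H J"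
    unfolding gen_subalg_def using BR_subalg[OF alg] by blast
qed

lemma lead_nonzero:
  assumes dom: "ring_domain TYPE('r)" and f: "f \<in> laurent" and g: "g \<in> laurent"
    and f0: "f \<noteq> lzero" and g0: "g \<noteq> lzero"
  shows "lmult \<sigma> f g \<noteq> lzero"
proof -
  let ?F = "{i. f i \<noteq> 0}" and ?G = "{j. g j \<noteq> 0}"
  have fF: "finite ?F" "?F \<noteq> {}" using f f0 by (auto simp: laurent_def lzero_def fun_eq_iff)
  have fG: "finite ?G" "?G \<noteq> {}" using g g0 by (auto simp: laurent_def lzero_def fun_eq_iff)
  define i0 where "i0 = Max ?F"
  define j0 where "j0 = Max ?G"
  have i0: "f i0 \<noteq> 0" using Max_in[OF fF] i0_def by auto
  have j0: "g j0 \<noteq> 0" using Max_in[OF fG] j0_def by auto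
  have "lmult \<sigma> f g (i0 + j0) = (\<Sum>i\<in>?F. f i * zpow \<sigma> i (g (i0 + j0 - i)))"
    by (simp add: lmult_def)
  also have "\<dots> = (\<Sum>i\<in>?F. if i = i0 then f i0 * zpow \<sigma> i0 (g j0) else 0)"
  proof (rule sum.cong)
    fix i assume i: "i \<in> ?F"
    show "f i * zpow \<sigma> i (g (i0 + j0 - i)) = (if i = i0 then f i0 * zpow \<sigma> i0 (g j0) else 0)"
    proof (cases "i = i0")
      case False
      have "i \<le> i0" using i fF i0_def by auto
      with False have "i0 + j0 - i > j0" by simp
      have "g (i0 + j0 - i) = 0"
      proof (rule ccontr)
        assume "g (i0 + j0 - i) \<noteq> 0"
        then have "i0 + j0 - i \<le> j0" using j0_def Max_ge[OF fG(1), of "i0 + j0 - i"] by simp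
        then show False using \<open>i0 + j0 - i > j0\<close> by simp
      qed
      then show ?thesis using False by simp
    qed simp
  qed simp
  also have "\<dots> = f i0 * zpow \<sigma> i0 (g j0)" using i0 fF by simp
  finally have "lmult \<sigma> f g (i0 + j0) \<noteq> 0"
    using dom i0 j0 zpow_eq0 unfolding ring_domain_def by metis
  then show ?thesis by (auto simp: lzero_def)
qed

lemma BR_domain: "lring_domain \<sigma> (BR \<sigma> H J) \<longleftrightarrow> ring_domain TYPE('r)"
proof
  assume d: "lring_domain \<sigma> (BR \<sigma> H J)"
  have one: "(1::'r) \<noteq> 0" using d by (auto simp: lring_domain_def lone_def lzero_def)
  have "a = 0 \<or> b = 0" if ab: "a * b = (0::'r)" for a b
  proof -
    have m: "lmono a 0 \<in> BR \<sigma> H J" "lmono b 0 \<in> BR \<sigma> H J"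
      using BR_comp_sub[of 0] by (auto simp: BR_comp_def Iseq_0)
    have "lmult \<sigma> (lmono a 0) (lmono b 0) = lzero" using ab by (simp add: lmult_mono zpow0)
    then have "lmono a 0 = lzero \<or> lmono b 0 = lzero" using d m by (auto simp: lring_domain_def)
    then show ?thesis by (metis lmono_0 lmono_inj)
  qed
  then show "ring_domain TYPE('r)" using one by (auto simp: ring_domain_def)
next
  assume d: "ring_domain TYPE('r)"
  have "(lone::int\<Rightarrow>'r) \<noteq> lzero" using d by (auto simp: ring_domain_def lone_def lzero_def lmono_def fun_eq_iff)
  then show "lring_domain \<sigma> (BR \<sigma> H J)"
    using lead_nonzero[OF d] by (auto simp: lring_domain_def BR_def)
qed

lemma BR_center:
  assumes dom: "ring_domain TYPE('r)"
    and hk: "\<forall>k::int. k \<noteq> 0 \<longrightarrow> \<not> (\<exists>a. a \<noteq> 0 \<and> (\<forall>r. r * a = a * zpow \<sigma> k r))"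
    and nz: "\<forall>n. Iseq \<sigma> H J n \<noteq> {0}"
  shows "lcenter \<sigma> (BR \<sigma> H J) = {lmono z 0 | z. z \<in> ring_center \<and> \<sigma> z = z}"
proof
  show "lcenter \<sigma> (BR \<sigma> H J) \<subseteq> {lmono z 0 | z. z \<in> ring_center \<and> \<sigma> z = z}"
  proof
    fix f assume "f \<in> lcenter \<sigma> (BR \<sigma> H J)"
    then have f: "f \<in> BR \<sigma> H J" and c: "\<And>g. g \<in> BR \<sigma> H J \<Longrightarrow> lmult \<sigma> f g = lmult \<sigma> g f"
      by (auto simp: lcenter_def)
    have fl: "f \<in> laurent" using f by (simp add: BR_def)
    have rc: "r * f n = f n * zpow \<sigma> n r" for r n
    proof -
      have "lmono r 0 \<in> BR \<sigma> H J" using BR_comp_sub[of 0] by (auto simp: BR_comp_def Iseq_0)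
      then have "lmult \<sigma> (lmono r 0) f n = lmult \<sigma> f (lmono r 0) n" using c by simp
      then show ?thesis using lmult_left0 lmult_right0[OF fl] by simp
    qed
    have fn: "f n = 0" if "n \<noteq> 0" for n
    proof (rule ccontr)
      assume "f n \<noteq> 0"
      then have "\<exists>a. a \<noteq> 0 \<and> (\<forall>r. r * a = a * zpow \<sigma> n r)" using rc by blast
      then show False using hk that by blast
    qed
    define z where "z = f 0"
    have fz: "f = lmono z 0" using fn by (auto simp: z_def lmono_def fun_eq_iff)
    have zc: "z \<in> ring_center" using rc[of _ 0] by (simp add: ring_center_def z_def zpow0)
    obtain j where j: "j \<in> J" "j \<noteq> 0" using nz ideal_zero[OF J] Iseq_1 by blast
    have "lmono j 1 \<in> BR \<sigma> H J" using BR_comp_sub[of 1] j by (auto simp: BR_comp_def Iseq_1)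
    then have "lmult \<sigma> f (lmono j 1) = lmult \<sigma> (lmono j 1) f" using c by simp
    then have "z * j = j * \<sigma> z" using fz by (auto simp: lmult_mono zpow0 zpow_def dest: lmono_inj)
    then have "j * (z - \<sigma> z) = 0" using zc by (simp add: ring_center_def right_diff_distrib)
    then have "z - \<sigma> z = 0" using dom j unfolding ring_domain_def by blast
    then have "\<sigma> z = z" by simp
    then show "f \<in> {lmono z 0 | z. z \<in> ring_center \<and> \<sigma> z = z}" using fz zc by auto
  qed
next
  show "{lmono z 0 | z. z \<in> ring_center \<and> \<sigma> z = z} \<subseteq> lcenter \<sigma> (BR \<sigma> H J)"
  proof
    fix f assume "f \<in> {lmono z 0 | z. z \<in> ring_center \<and> \<sigma> z = z}"
    then obtain z where z: "f = lmono z 0" "z \<in> ring_center" "\<sigma> z = z" by auto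
    have "f \<in> BR \<sigma> H J" using BR_comp_sub[of 0] z by (auto simp: BR_comp_def Iseq_0)
    moreover have "lmult \<sigma> f g = lmult \<sigma> g f" if g: "g \<in> BR \<sigma> H J" for g
    proof
      fix n
      have gl: "g \<in> laurent" using g by (simp add: BR_def)
      show "lmult \<sigma> f g n = lmult \<sigma> g f n"
        using z lmult_left0 lmult_right0[OF gl] zpow_fix[OF z(3)] by (simp add: ring_center_def)
    qed
    ultimately show "f \<in> lcenter \<sigma> (BR \<sigma> H J)" by (simp add: lcenter_def)
  qed
qed

end

theorem lemma2p1:
  fixes alg :: "'k::field \<Rightarrow> 'r::ring_1"
    and \<sigma> :: "'r \<Rightarrow> 'r"
    and H J :: "'r set"
  assumes "k_algebra alg"
    and "k_automorphism alg \<sigma>"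
    and "two_sided_ideal H" and "two_sided_ideal J"
    and "\<forall>n. Iseq \<sigma> H J n \<noteq> {0}"
  shows "(is_subalg alg \<sigma> (BR \<sigma> H J)
          \<and> (\<forall>n. BR_comp \<sigma> H J n \<subseteq> BR \<sigma> H J)
          \<and> (\<forall>m n. \<forall>f\<in>BR_comp \<sigma> H J m. \<forall>g\<in>BR_comp \<sigma> H J n.
                lmult \<sigma> f g \<in> BR_comp \<sigma> H J (m + n)))
     \<and> BR \<sigma> H J = gen_subalg alg \<sigma>
          ({lmono r 0 | r. True} \<union> {lmono j 1 | j. j \<in> J}
           \<union> {lmono (zpow \<sigma> (-1) h) (-1) | h. h \<in> H})
     \<and> (lring_domain \<sigma> (BR \<sigma> H J) \<longleftrightarrow> ring_domain TYPE('r))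
     \<and> ((ring_domain TYPE('r)
         \<and> (\<forall>n::nat. n > 0 \<longrightarrow> \<sigma> ^^ n \<noteq> id)
         \<and> (\<forall>k::int. k \<noteq> 0 \<longrightarrow> \<not> (\<exists>a. a \<noteq> 0 \<and> (\<forall>r. r * a = a * zpow \<sigma> k r))))
        \<longrightarrow> lcenter \<sigma> (BR \<sigma> H J) = {lmono z 0 | z. z \<in> ring_center \<and> \<sigma> z = z})"
proof -
  interpret brctx \<sigma> H J
    using assms(2-4) by unfold_locales (auto simp: k_automorphism_def rhom_def)
  have 1: "is_subalg alg \<sigma> (BR \<sigma> H J)" by (rule BR_subalg[OF assms(1)])
  have 2: "\<forall>n. BR_comp \<sigma> H J n \<subseteq> BR \<sigma> H J" using BR_comp_sub by blast
  have 3: "\<forall>m n. \<forall>f\<in>BR_comp \<sigma> H J m. \<forall>g\<in>BR_comp \<sigma> H J n.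
                lmult \<sigma> f g \<in> BR_comp \<sigma> H J (m + n)" using BR_comp_mult by blast
  have 6: "(ring_domain TYPE('r)
         \<and> (\<forall>n::nat. n > 0 \<longrightarrow> \<sigma> ^^ n \<noteq> id)
         \<and> (\<forall>k::int. k \<noteq> 0 \<longrightarrow> \<not> (\<exists>a. a \<noteq> 0 \<and> (\<forall>r. r * a = a * zpow \<sigma> k r))))
        \<longrightarrow> lcenter \<sigma> (BR \<sigma> H J) = {lmono z 0 | z. z \<in> ring_center \<and> \<sigma> z = z}"
  proof (intro impI, elim conjE)
    assume "ring_domain TYPE('r)"
      "\<forall>k::int. k \<noteq> 0 \<longrightarrow> \<not> (\<exists>a. a \<noteq> 0 \<and> (\<forall>r. r * a = a * zpow \<sigma> k r))"
    then show "lcenter \<sigma> (BR \<sigma> H J) = {lmono z 0 | z. z \<in> ring_center \<and> \<sigma> z = z}"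
      by (rule BR_center[OF _ _ assms(5)])
  qed
  show ?thesis using 1 2 3 BR_gen[OF assms(1)] BR_domain 6 by (intro conjI)
qed

end
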